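(* Let $G$ be an additive group and let $X$, $\preceq$, $\rho$ be as described below. Then the metric space $(X,\rho)$ is geodesic and $(X,\rho,\preceq)$ is a metric $\vee$-semilattice.
   Context: A function on an interval $(\alpha,\beta)$ is piecewise constant from the left if for every $x$ there is $\varepsilon>0$ with $f$ constant on $[x-\varepsilon,x]$. $X$ is the set of pairs $(f,a_f)$, $a_f>0$ real, $f:(a_f,+\infty)\to G$ piecewise constant from the left with $f|_{(b_f,+\infty)}\equiv0$ for some $b_f\ge a_f$. Order: $(f,a_f)\preceq(g,a_g)$ iff $a_f\le a_g$ and $f|_{(a_g,+\infty)}=g$; $(X,\preceq)$ is a $\vee$-semilattice, with supremum denoted $p\vee q$. Metric: $\rho((f,a_f),(g,a_g))=|a_f-a_g|$ if the two pairs are comparable, and $\rho(p,q)=\rho(p,p\vee q)+\rho(p\vee q,q)$ if $p,q$ are incomparable. A metric space is geodesic if any two points are joined by a segment (an isometric image of a real segment). $(X,\rho,\preceq)$ is a metric $\vee$-semilattice if (1) $x\preceq z\preceq y$ implies $\rho(x,z)+\rho(z,y)=\rho(x,y)$, and (2) $\rho(x,y)=\rho(x,x\vee y)+\rho(x\vee y,y)$ for all $x,y$. *)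

theory Defs
  imports Complex_Main
begin

text \<open>An element of X is a pair (f, a) with a > 0 and f : (a, +inf) -> G.
  Convention: f is represented as a total function real => 'g which is 0
  outside its domain (a, +inf), so equality of pairs is equality of the
  mathematical objects.\<close>

definition pc_left :: "real \<Rightarrow> (real \<Rightarrow> 'g) \<Rightarrow> bool" where
  "pc_left a f \<longleftrightarrow> (\<forall>x>a. \<exists>\<epsilon>>0. x - \<epsilon> > a \<and> (\<forall>y\<in>{x-\<epsilon>..x}. f y = f x))"

definition Xset :: "((real \<Rightarrow> 'g::group_add) \<times> real) set" where
  "Xset = {(f, a). a > 0 \<and> (\<forall>x\<le>a. f x = 0) \<and> pc_left a f
                 \<and> (\<exists>b\<ge>a. \<forall>x>b. f x = 0)}"

definition leqX :: "((real \<Rightarrow> 'g::group_add) \<times> real) \<Rightarrow> ((real \<Rightarrow> 'g) \<times> real) \<Rightarrow> bool" where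
  "leqX p q \<longleftrightarrow> snd p \<le> snd q \<and> (\<forall>x>snd q. fst p x = fst q x)"

definition joinX :: "((real \<Rightarrow> 'g::group_add) \<times> real) \<Rightarrow> ((real \<Rightarrow> 'g) \<times> real) \<Rightarrow> ((real \<Rightarrow> 'g) \<times> real)" where
  "joinX p q = (THE z. z \<in> Xset \<and> leqX p z \<and> leqX q z \<and>
                   (\<forall>w\<in>Xset. leqX p w \<and> leqX q w \<longrightarrow> leqX z w))"

definition rhoX :: "((real \<Rightarrow> 'g::group_add) \<times> real) \<Rightarrow> ((real \<Rightarrow> 'g) \<times> real) \<Rightarrow> real" where
  "rhoX p q = (if leqX p q \<or> leqX q p then \<bar>snd p - snd q\<bar>
               else \<bar>snd p - snd (joinX p q)\<bar> + \<bar>snd (joinX p q) - snd q\<bar>)"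

definition metric_on :: "'a set \<Rightarrow> ('a \<Rightarrow> 'a \<Rightarrow> real) \<Rightarrow> bool" where
  "metric_on S d \<longleftrightarrow> (\<forall>x\<in>S. \<forall>y\<in>S. d x y \<ge> 0 \<and> (d x y = 0 \<longleftrightarrow> x = y) \<and> d x y = d y x)
                    \<and> (\<forall>x\<in>S. \<forall>y\<in>S. \<forall>z\<in>S. d x z \<le> d x y + d y z)"

definition geodesic_on :: "'a set \<Rightarrow> ('a \<Rightarrow> 'a \<Rightarrow> real) \<Rightarrow> bool" where
  "geodesic_on S d \<longleftrightarrow> (\<forall>x\<in>S. \<forall>y\<in>S. \<exists>\<gamma> :: real \<Rightarrow> 'a.
       \<gamma> ` {0..d x y} \<subseteq> S \<and> \<gamma> 0 = x \<and> \<gamma> (d x y) = y \<and>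
       (\<forall>s\<in>{0..d x y}. \<forall>t\<in>{0..d x y}. d (\<gamma> s) (\<gamma> t) = \<bar>s - t\<bar>))"

definition join_semilattice_on :: "'a set \<Rightarrow> ('a \<Rightarrow> 'a \<Rightarrow> bool) \<Rightarrow> ('a \<Rightarrow> 'a \<Rightarrow> 'a) \<Rightarrow> bool" where
  "join_semilattice_on S le j \<longleftrightarrow>
     (\<forall>x\<in>S. le x x) \<and> (\<forall>x\<in>S. \<forall>y\<in>S. le x y \<and> le y x \<longrightarrow> x = y)
     \<and> (\<forall>x\<in>S. \<forall>y\<in>S. \<forall>z\<in>S. le x y \<and> le y z \<longrightarrow> le x z)
     \<and> (\<forall>x\<in>S. \<forall>y\<in>S. j x y \<in> S \<and> le x (j x y) \<and> le y (j x y)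
            \<and> (\<forall>z\<in>S. le x z \<and> le y z \<longrightarrow> le (j x y) z))"

definition metric_join_semilattice :: "'a set \<Rightarrow> ('a \<Rightarrow> 'a \<Rightarrow> real) \<Rightarrow> ('a \<Rightarrow> 'a \<Rightarrow> bool) \<Rightarrow> ('a \<Rightarrow> 'a \<Rightarrow> 'a) \<Rightarrow> bool" where
  "metric_join_semilattice S d le j \<longleftrightarrow>
     metric_on S d \<and> join_semilattice_on S le j
     \<and> (\<forall>x\<in>S. \<forall>y\<in>S. \<forall>z\<in>S. le x z \<and> le z y \<longrightarrow> d x z + d z y = d x y)
     \<and> (\<forall>x\<in>S. \<forall>y\<in>S. d x y = d x (j x y) + d (j x y) y)"

end

theory Submission
  imports Defs
begin

definition cutX :: "(real \<Rightarrow> 'g::zero) \<Rightarrow> real \<Rightarrow> (real \<Rightarrow> 'g) \<times> real" where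
  "cutX f t = ((\<lambda>x. if t < x then f x else 0), t)"

definition Sset :: "((real \<Rightarrow> 'g::group_add) \<times> real) \<Rightarrow> ((real \<Rightarrow> 'g) \<times> real) \<Rightarrow> real set" where
  "Sset p q = {c. snd p \<le> c \<and> snd q \<le> c \<and> (\<forall>x>c. fst p x = fst q x)}"

definition cval :: "((real \<Rightarrow> 'g::group_add) \<times> real) \<Rightarrow> ((real \<Rightarrow> 'g) \<times> real) \<Rightarrow> real" where
  "cval p q = Inf (Sset p q)"

lemma X_pos: "p \<in> Xset \<Longrightarrow> snd p > 0"
  by (auto simp: Xset_def)

lemma X_zero: "p \<in> Xset \<Longrightarrow> x \<le> snd p \<Longrightarrow> fst p x = 0"
  by (auto simp: Xset_def)

lemma X_ev: "p \<in> Xset \<Longrightarrow> \<exists>b\<ge>snd p. \<forall>x>b. fst p x = 0"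
  by (auto simp: Xset_def)

lemma X_pc: "p \<in> Xset \<Longrightarrow> pc_left (snd p) (fst p)"
  by (auto simp: Xset_def)

lemma X_eq: "p \<in> Xset \<Longrightarrow> cutX (fst p) (snd p) = p"
  by (cases p) (auto simp: cutX_def Xset_def intro!: ext)

lemma cut_X:
  assumes p: "p \<in> Xset" and t: "snd p \<le> t"
  shows "cutX (fst p) t \<in> Xset"
proof -
  have tpos: "t > 0" using X_pos[OF p] t by simp
  obtain b where b: "b \<ge> snd p" "\<forall>x>b. fst p x = 0" using X_ev[OF p] by blast
  have pc: "pc_left t (\<lambda>x. if t < x then fst p x else 0)"
    unfolding pc_left_def
  proof (intro allI impI)
    fix x assume x: "x > t"
    then have "x > snd p" using t by simp
    then obtain e where e: "e > 0" "x - e > snd p" "\<forall>y\<in>{x-e..x}. fst p y = fst p x"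
      using X_pc[OF p] unfolding pc_left_def by blast
    define e' where "e' = min e ((x - t)/2)"
    have "e' \<le> (x-t)/2" unfolding e'_def by (rule min.cobounded2)
    then have "e' > 0" "x - e' > t" using e x by (auto simp: e'_def)
    moreover have "e' \<le> e" unfolding e'_def by (rule min.cobounded1)
    moreover have "(if t < y then fst p y else 0) = (if t < x then fst p x else 0)"
      if y: "y \<in> {x-e'..x}" for y
    proof -
      have "t < y" using y \<open>x - e' > t\<close> by simp
      moreover have "y \<in> {x-e..x}" using y \<open>e' \<le> e\<close> by simp
      moreover have "fst p y = fst p x" using e(3) \<open>y \<in> {x-e..x}\<close> by blast
      ultimately show ?thesis using x by simp
    qed
    ultimately show "\<exists>\<epsilon>>0. x - \<epsilon> > t \<and> (\<forall>y\<in>{x-\<epsilon>..x}. (if t < y then fst p y else 0) = (if t < x then fst p x else 0))"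
      by blast
  qed
  have zb: "\<forall>x\<le>t. (if t < x then fst p x else 0) = 0" by simp
  have ev: "\<exists>b'\<ge>t. \<forall>x>b'. (if t < x then fst p x else 0) = 0"
    using b by (intro exI[of _ "max b t"]) simp
  show ?thesis unfolding Xset_def cutX_def
    using tpos pc zb ev by simp
qed

lemma leq_cut: "p \<in> Xset \<Longrightarrow> snd p \<le> t \<Longrightarrow> leqX p (cutX (fst p) t)"
  by (auto simp: leqX_def cutX_def)

lemma leq_cut2: "snd p \<le> s \<Longrightarrow> s \<le> t \<Longrightarrow> leqX (cutX f s) (cutX f t)"
  by (auto simp: leqX_def cutX_def)

lemma S_ne: assumes p: "p \<in> Xset" and q: "q \<in> Xset" shows "Sset p q \<noteq> {}"
proof -
  obtain b1 where b1: "b1 \<ge> snd p" "\<forall>x>b1. fst p x = 0" using X_ev[OF p] by blast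
  obtain b2 where b2: "b2 \<ge> snd q" "\<forall>x>b2. fst q x = 0" using X_ev[OF q] by blast
  have "max b1 b2 \<in> Sset p q" using b1 b2 by (auto simp: Sset_def)
  then show ?thesis by blast
qed

lemma S_bdd: "bdd_below (Sset p q)"
  by (rule bdd_belowI[of _ "snd p"]) (auto simp: Sset_def)

lemma cval_le: "c \<in> Sset p q \<Longrightarrow> cval p q \<le> c"
  unfolding cval_def by (rule cInf_lower[OF _ S_bdd])

lemma cval_ge1: "p \<in> Xset \<Longrightarrow> q \<in> Xset \<Longrightarrow> snd p \<le> cval p q"
  unfolding cval_def by (rule cInf_greatest[OF S_ne]) (auto simp: Sset_def)

lemma cval_ge2: "p \<in> Xset \<Longrightarrow> q \<in> Xset \<Longrightarrow> snd q \<le> cval p q"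
  unfolding cval_def by (rule cInf_greatest[OF S_ne]) (auto simp: Sset_def)

lemma cval_eq: assumes p: "p \<in> Xset" and q: "q \<in> Xset" and x: "x > cval p q"
  shows "fst p x = fst q x"
proof -
  from x have "\<exists>y\<in>Sset p q. y < x" unfolding cval_def
    using cInf_less_iff[OF S_ne[OF p q] S_bdd] by blast
  then show ?thesis by (auto simp: Sset_def)
qed

lemma cval_in: assumes "p \<in> Xset" "q \<in> Xset" shows "cval p q \<in> Sset p q"
  using cval_ge1[OF assms] cval_ge2[OF assms] cval_eq[OF assms] by (auto simp: Sset_def)

lemma cval_unique: "c \<in> Sset p q \<Longrightarrow> (\<And>d. d \<in> Sset p q \<Longrightarrow> c \<le> d) \<Longrightarrow> cval p q = c"
  unfolding cval_def by (rule cInf_eq_minimum)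

lemma S_sym: "Sset p q = Sset q p"
  by (auto simp: Sset_def)

lemma cval_sym: "cval p q = cval q p"
  by (simp add: cval_def S_sym)

lemma leq_refl: "leqX p p"
  by (simp add: leqX_def)

lemma leq_antisym: assumes p: "p \<in> Xset" and q: "q \<in> Xset" and pq: "leqX p q" and qp: "leqX q p"
  shows "p = q"
proof -
  have s: "snd p = snd q" using pq qp by (auto simp: leqX_def)
  have "fst p x = fst q x" for x
  proof (cases "x \<le> snd p")
    case True then show ?thesis using X_zero[OF p] X_zero[OF q] s by simp
  next
    case False then show ?thesis using qp by (auto simp: leqX_def)
  qed
  then have "fst p = fst q" by blast
  then show ?thesis using s by (simp add: prod_eq_iff)
qed

lemma leq_trans: "leqX p q \<Longrightarrow> leqX q r \<Longrightarrow> leqX p r"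
  by (auto simp: leqX_def)

definition jn where "jn p q = cutX (fst p) (cval p q)"

lemma jn_X: "p \<in> Xset \<Longrightarrow> q \<in> Xset \<Longrightarrow> jn p q \<in> Xset"
  unfolding jn_def by (rule cut_X) (auto intro: cval_ge1)

lemma jn_ub1: "p \<in> Xset \<Longrightarrow> q \<in> Xset \<Longrightarrow> leqX p (jn p q)"
  unfolding jn_def by (rule leq_cut) (auto intro: cval_ge1)

lemma jn_ub2: assumes "p \<in> Xset" "q \<in> Xset" shows "leqX q (jn p q)"
  unfolding jn_def using cval_ge2[OF assms] cval_eq[OF assms] by (auto simp: leqX_def cutX_def)

lemma jn_least: assumes p: "p \<in> Xset" and q: "q \<in> Xset" and w: "w \<in> Xset"
  and pw: "leqX p w" and qw: "leqX q w" shows "leqX (jn p q) w"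
proof -
  have "snd w \<in> Sset p q" using pw qw by (auto simp: leqX_def Sset_def)
  then have "cval p q \<le> snd w" by (rule cval_le)
  then show ?thesis using pw by (auto simp: leqX_def jn_def cutX_def)
qed

lemma join_eq: assumes p: "p \<in> Xset" and q: "q \<in> Xset" shows "joinX p q = jn p q"
  unfolding joinX_def
proof (rule the_equality)
  show "jn p q \<in> Xset \<and> leqX p (jn p q) \<and> leqX q (jn p q) \<and>
    (\<forall>w\<in>Xset. leqX p w \<and> leqX q w \<longrightarrow> leqX (jn p q) w)"
    using jn_X jn_ub1 jn_ub2 jn_least p q by blast
next
  fix z assume z: "z \<in> Xset \<and> leqX p z \<and> leqX q z \<and>
    (\<forall>w\<in>Xset. leqX p w \<and> leqX q w \<longrightarrow> leqX z w)"
  then have "leqX z (jn p q)" using jn_X jn_ub1 jn_ub2 p q by blast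
  moreover have "leqX (jn p q) z" using jn_least p q z by blast
  ultimately show "z = jn p q" using leq_antisym z jn_X p q by blast
qed

lemma rho_leq: "leqX p q \<Longrightarrow> rhoX p q = snd q - snd p"
  by (auto simp: rhoX_def leqX_def)

lemma rho_sym_leq: "leqX q p \<Longrightarrow> rhoX p q = snd p - snd q"
  by (auto simp: rhoX_def leqX_def)

lemma cval_leq: assumes p: "p \<in> Xset" and q: "q \<in> Xset" and pq: "leqX p q"
  shows "cval p q = snd q"
  using pq cval_ge2[OF p q] by (intro cval_unique) (auto simp: Sset_def leqX_def)

lemma rho_formula: assumes p: "p \<in> Xset" and q: "q \<in> Xset"
  shows "rhoX p q = 2 * cval p q - snd p - snd q"
proof (cases "leqX p q \<or> leqX q p")
  case True
  then show ?thesis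
  proof
    assume "leqX p q" then show ?thesis using cval_leq[OF p q] by (simp add: rho_leq)
  next
    assume "leqX q p" then show ?thesis using cval_leq[OF q p] cval_sym[of p q]
      by (simp add: rho_sym_leq)
  qed
next
  case False
  have "snd (joinX p q) = cval p q" using join_eq[OF p q] by (simp add: jn_def cutX_def)
  then show ?thesis using False cval_ge1[OF p q] cval_ge2[OF p q] by (simp add: rhoX_def)
qed

lemma rho_sym: "p \<in> Xset \<Longrightarrow> q \<in> Xset \<Longrightarrow> rhoX p q = rhoX q p"
  by (simp add: rho_formula cval_sym)

lemma cval_self: "p \<in> Xset \<Longrightarrow> cval p p = snd p"
  by (rule cval_leq) (auto simp: leq_refl)

lemma metric: "metric_on (Xset :: ((real \<Rightarrow> 'g::group_add) \<times> real) set) rhoX"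
  unfolding metric_on_def
proof (intro conjI ballI)
  fix x y :: "(real \<Rightarrow> 'g) \<times> real" assume x: "x \<in> Xset" and y: "y \<in> Xset"
  show "rhoX x y \<ge> 0" using rho_formula[OF x y] cval_ge1[OF x y] cval_ge2[OF x y] by simp
  show "rhoX x y = rhoX y x" using rho_sym x y by blast
  show "rhoX x y = 0 \<longleftrightarrow> x = y"
  proof
    assume "rhoX x y = 0"
    then have e: "snd x = cval x y" "snd y = cval x y"
      using rho_formula[OF x y] cval_ge1[OF x y] cval_ge2[OF x y] by simp_all
    then have "leqX x y" using cval_eq[OF x y] by (auto simp: leqX_def)
    moreover have "leqX y x" using e cval_eq[OF x y] by (auto simp: leqX_def)
    ultimately show "x = y" using leq_antisym x y by blast
  next
    assume "x = y" then show "rhoX x y = 0" using rho_formula[OF x x] cval_self[OF x] by simp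
  qed
next
  fix x y z :: "(real \<Rightarrow> 'g) \<times> real" assume x: "x \<in> Xset" and y: "y \<in> Xset" and z: "z \<in> Xset"
  define m where "m = max (cval x y) (cval y z)"
  have "m \<in> Sset x z"
    using cval_ge1[OF x y] cval_ge2[OF y z] cval_eq[OF x y] cval_eq[OF y z]
    by (auto simp: Sset_def m_def)
  then have "cval x z \<le> m" by (rule cval_le)
  moreover have "snd y \<le> min (cval x y) (cval y z)"
    using cval_ge2[OF x y] cval_ge1[OF y z] by simp
  ultimately show "rhoX x z \<le> rhoX x y + rhoX y z"
    using rho_formula[OF x y] rho_formula[OF y z] rho_formula[OF x z] m_def
    by linarith
qed

lemma semilattice: "join_semilattice_on (Xset :: ((real \<Rightarrow> 'g::group_add) \<times> real) set) leqX joinX"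
  unfolding join_semilattice_on_def
proof (intro conjI ballI impI)
  fix x y :: "(real \<Rightarrow> 'g) \<times> real" assume x: "x \<in> Xset" and y: "y \<in> Xset"
  show "joinX x y \<in> Xset" using join_eq[OF x y] jn_X[OF x y] by simp
  show "leqX x (joinX x y)" using join_eq[OF x y] jn_ub1[OF x y] by simp
  show "leqX y (joinX x y)" using join_eq[OF x y] jn_ub2[OF x y] by simp
  fix z assume z: "z \<in> Xset" and h: "leqX x z \<and> leqX y z"
  show "leqX (joinX x y) z" using join_eq[OF x y] jn_least[OF x y z] h by simp
next
  fix x show "leqX x x" by (rule leq_refl)
next
  fix x y :: "(real \<Rightarrow> 'g) \<times> real" assume "x \<in> Xset" "y \<in> Xset" "leqX x y \<and> leqX y x"
  then show "x = y" using leq_antisym by blast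
next
  fix x y z :: "(real \<Rightarrow> 'g) \<times> real" assume "leqX x y \<and> leqX y z"
  then show "leqX x z" using leq_trans by blast
qed

lemma mjs: "metric_join_semilattice (Xset :: ((real \<Rightarrow> 'g::group_add) \<times> real) set) rhoX leqX joinX"
  unfolding metric_join_semilattice_def
proof (intro conjI ballI impI metric semilattice)
  fix x y z :: "(real \<Rightarrow> 'g) \<times> real" assume "x \<in> Xset" "y \<in> Xset" "z \<in> Xset"
    and h: "leqX x z \<and> leqX z y"
  then show "rhoX x z + rhoX z y = rhoX x y"
    using rho_leq[of x z] rho_leq[of z y] rho_leq[of x y] leq_trans[of x z y] by simp
next
  fix x y :: "(real \<Rightarrow> 'g) \<times> real" assume x: "x \<in> Xset" and y: "y \<in> Xset"
  have j: "joinX x y = jn x y" by (rule join_eq[OF x y])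
  have s: "snd (jn x y) = cval x y" by (simp add: jn_def cutX_def)
  show "rhoX x y = rhoX x (joinX x y) + rhoX (joinX x y) y"
    unfolding j
    using rho_leq[OF jn_ub1[OF x y]] rho_sym_leq[OF jn_ub2[OF x y]] s rho_formula[OF x y]
    by simp
qed


lemma rho_cut_same: "rhoX (cutX f u) (cutX f v) = \<bar>u - v\<bar>"
proof (cases "u \<le> v")
  case True
  have "leqX (cutX f u) (cutX f v)" using True by (auto simp: leqX_def cutX_def)
  then show ?thesis using True by (simp add: rho_leq cutX_def)
next
  case False
  have "leqX (cutX f v) (cutX f u)" using False by (auto simp: leqX_def cutX_def)
  then show ?thesis using False by (simp add: rho_sym_leq cutX_def)
qed

lemma cut_boundary: assumes p: "p \<in> Xset" and q: "q \<in> Xset"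
  shows "cutX (fst p) (cval p q) = cutX (fst q) (cval p q)"
  using cval_eq[OF p q] by (auto simp: cutX_def intro!: ext)

lemma rho_mixed: assumes p: "p \<in> Xset" and q: "q \<in> Xset"
  and s1: "snd p \<le> s1" "s1 \<le> cval p q" and t1: "snd q \<le> t1" "t1 \<le> cval p q"
  shows "rhoX (cutX (fst p) s1) (cutX (fst q) t1) = 2 * cval p q - s1 - t1"
proof -
  have P: "cutX (fst p) s1 \<in> Xset" by (rule cut_X[OF p s1(1)])
  have Q: "cutX (fst q) t1 \<in> Xset" by (rule cut_X[OF q t1(1)])
  have "cval (cutX (fst p) s1) (cutX (fst q) t1) = cval p q"
  proof (rule cval_unique)
    show "cval p q \<in> Sset (cutX (fst p) s1) (cutX (fst q) t1)"
      using s1 t1 cval_eq[OF p q] by (auto simp: Sset_def cutX_def)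
  next
    fix d assume d: "d \<in> Sset (cutX (fst p) s1) (cutX (fst q) t1)"
    have "d \<in> Sset p q"
    proof -
      have "s1 \<le> d" "t1 \<le> d" using d by (auto simp: Sset_def cutX_def)
      moreover have "fst p x = fst q x" if "x > d" for x
        using d that \<open>s1 \<le> d\<close> \<open>t1 \<le> d\<close> by (auto simp: Sset_def cutX_def)
      ultimately show ?thesis using s1 t1 by (auto simp: Sset_def)
    qed
    then show "cval p q \<le> d" by (rule cval_le)
  qed
  then show ?thesis using rho_formula[OF P Q] by (simp add: cutX_def)
qed

lemma geodesic: "geodesic_on (Xset :: ((real \<Rightarrow> 'g::group_add) \<times> real) set) rhoX"
  unfolding geodesic_on_def
proof (intro ballI)
  fix p q :: "(real \<Rightarrow> 'g) \<times> real" assume p: "p \<in> Xset" and q: "q \<in> Xset"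
  define a where "a = snd p"
  define b where "b = snd q"
  define c where "c = cval p q"
  have ac: "a \<le> c" and bc: "b \<le> c" using cval_ge1[OF p q] cval_ge2[OF p q] by (simp_all add: a_def b_def c_def)
  have D: "rhoX p q = 2 * c - a - b" using rho_formula[OF p q] by (simp add: a_def b_def c_def)
  define \<gamma> where "\<gamma> t = (if t \<le> c - a then cutX (fst p) (a + t) else cutX (fst q) (2 * c - a - t))" for t
  have img: "\<gamma> t \<in> Xset" if "t \<in> {0..rhoX p q}" for t
  proof (cases "t \<le> c - a")
    case True then show ?thesis using that cut_X[OF p, of "a + t"] by (simp add: \<gamma>_def a_def)
  next
    case False then show ?thesis using that D cut_X[OF q, of "2 * c - a - t"] by (simp add: \<gamma>_def b_def)
  qed
  have g0: "\<gamma> 0 = p" using ac X_eq[OF p] by (simp add: \<gamma>_def a_def)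
  have gD: "\<gamma> (rhoX p q) = q"
  proof (cases "rhoX p q \<le> c - a")
    case True
    then have "c = b" using D bc by simp
    then have "\<gamma> (rhoX p q) = cutX (fst p) c" using True D by (simp add: \<gamma>_def)
    also have "\<dots> = cutX (fst q) c" using cut_boundary[OF p q] by (simp add: c_def)
    also have "\<dots> = q" using \<open>c = b\<close> X_eq[OF q] by (simp add: b_def)
    finally show ?thesis .
  next
    case False
    then show ?thesis using D X_eq[OF q] by (simp add: \<gamma>_def b_def)
  qed
  have iso: "rhoX (\<gamma> s) (\<gamma> t) = \<bar>s - t\<bar>" if s: "s \<in> {0..rhoX p q}" and t: "t \<in> {0..rhoX p q}" for s t
  proof (cases "s \<le> c - a")
    case True
    note sT = True
    show ?thesis
    proof (cases "t \<le> c - a")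
      case True then show ?thesis using sT by (simp add: \<gamma>_def rho_cut_same)
    next
      case False
      have "rhoX (cutX (fst p) (a + s)) (cutX (fst q) (2 * c - a - t)) = 2 * c - (a + s) - (2 * c - a - t)"
        using rho_mixed[OF p q, of "a + s" "2 * c - a - t"] s t sT False D
        by (simp add: a_def b_def c_def)
      then show ?thesis using sT False by (simp add: \<gamma>_def)
    qed
  next
    case False
    note sF = False
    show ?thesis
    proof (cases "t \<le> c - a")
      case True
      have "rhoX (cutX (fst p) (a + t)) (cutX (fst q) (2 * c - a - s)) = 2 * c - (a + t) - (2 * c - a - s)"
        using rho_mixed[OF p q, of "a + t" "2 * c - a - s"] s t sF True D
        by (simp add: a_def b_def c_def)
      moreover have "rhoX (\<gamma> s) (\<gamma> t) = rhoX (\<gamma> t) (\<gamma> s)"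
        using rho_sym img s t by blast
      ultimately show ?thesis using sF True by (simp add: \<gamma>_def)
    next
      case False then show ?thesis using sF by (simp add: \<gamma>_def rho_cut_same)
    qed
  qed
  show "\<exists>\<gamma> :: real \<Rightarrow> (real \<Rightarrow> 'g) \<times> real. \<gamma> ` {0..rhoX p q} \<subseteq> Xset \<and> \<gamma> 0 = p \<and> \<gamma> (rhoX p q) = q \<and>
       (\<forall>s\<in>{0..rhoX p q}. \<forall>t\<in>{0..rhoX p q}. rhoX (\<gamma> s) (\<gamma> t) = \<bar>s - t\<bar>)"
    using img g0 gD iso by (intro exI[of _ \<gamma>]) blast
qed

theorem lemma5:
  shows "metric_on (Xset :: ((real \<Rightarrow> 'g::group_add) \<times> real) set) rhoX
       \<and> geodesic_on (Xset :: ((real \<Rightarrow> 'g::group_add) \<times> real) set) rhoX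
       \<and> metric_join_semilattice (Xset :: ((real \<Rightarrow> 'g::group_add) \<times> real) set) rhoX leqX joinX"
  using metric geodesic mjs by blast

end
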